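(* Let $\mathcal{G}=(I,E)$ be a simple, undirected, connected graph with finite node set $I$, let $\mathfrak{f}\notin I$ and $I_\mathfrak{f}:=I\cup\{\mathfrak{f}\}$. Let $Q\in\mathbb{R}_+^{I\times I}$ and $\mathbf{q}\in\mathbb{R}_+^{I}$ satisfy: $Q_{ij}=0$ iff $\{i,j\}\notin E$, and $\sum_{j\in I}Q_{ij}+q_i=1$ for every $i\in I$. Assume (i) $\mathbf{q}$ is not identically zero and, for every $\ell\in I$, $Q_{I\setminus\{\ell\},I\setminus\{\ell\}}$ is strictly sub-stochastic; and (ii) there is a symmetric $C\in\mathbb{R}_+^{I_\mathfrak{f}\times I_\mathfrak{f}}$ with $Q_{ij}=C_{ij}/\sum_{k\in I_\mathfrak{f}}C_{ik}$ and $q_i=C_{i\mathfrak{f}}/\sum_{k\in I_\mathfrak{f}}C_{ik}$ for all $i,j\in I$. Consider the following Message Passing Algorithm (MPA). For each ordered pair $(i,j)$ with $\{i,j\}\in E$, node $i$ sends to $j$ messages $W^{i\to j}(t)$ and $H^{i\to j}(t)$, $t=0,1,2,\dots$, with $W^{i\to j}(0)=H^{i\to j}(0)=1$ and, synchronously for all such pairs, $$W^{i\to j}(t+1)=\frac{1}{1+\frac{q_i}{Q_{ij}}+\sum_{k\in N_i\setminus\{j\}}\frac{Q_{ik}}{Q_{ij}}\big(1-W^{k\to i}(t)\big)},\qquad H^{i\to j}(t+1)=1+\sum_{k\in N_i\setminus\{j\}}W^{k\to i}(t)\,H^{k\to i}(t),$$ where $N_i=\{w\in I:\{i,w\}\in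 E\}$. Each node $\ell\in I$ computes $H^\ell(t)=1+\sum_{i\in N_\ell}W^{i\to\ell}(t)\,H^{i\to\ell}(t)$. Then the MPA converges: for every ordered pair $(i,j)$ with $\{i,j\}\in E$ the sequences $W^{i\to j}(t)$ and $H^{i\to j}(t)$ converge as $t\to\infty$, and consequently $H^\ell(t)$ converges for every $\ell\in I$.
   Context: A nonnegative matrix is strictly sub-stochastic if all its row sums are $\le 1$ and at least one is $<1$; $Q_{T,T}$ denotes the principal submatrix indexed by $T$. *)

theory Defs
  imports "HOL-Analysis.Analysis"
begin

definition nbrs :: "'a set \<Rightarrow> ('a \<Rightarrow> 'a \<Rightarrow> bool) \<Rightarrow> 'a \<Rightarrow> 'a set" where
  "nbrs I adj i = {w \<in> I. adj i w}"

definition strictly_substochastic :: "('a \<Rightarrow> 'a \<Rightarrow> real) \<Rightarrow> 'a set \<Rightarrow> bool" where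
  "strictly_substochastic Q T \<longleftrightarrow>
     (\<forall>i\<in>T. \<forall>j\<in>T. Q i j \<ge> 0) \<and>
     (\<forall>i\<in>T. (\<Sum>j\<in>T. Q i j) \<le> 1) \<and> (\<exists>i\<in>T. (\<Sum>j\<in>T. Q i j) < 1)"

text \<open>The message passing algorithm: returns (W(t), H(t)), where W(t) i j = W^{i->j}(t).\<close>
primrec mpa :: "'a set \<Rightarrow> ('a \<Rightarrow> 'a \<Rightarrow> bool) \<Rightarrow> ('a \<Rightarrow> 'a \<Rightarrow> real) \<Rightarrow> ('a \<Rightarrow> real) \<Rightarrow> nat
    \<Rightarrow> ('a \<Rightarrow> 'a \<Rightarrow> real) \<times> ('a \<Rightarrow> 'a \<Rightarrow> real)" where
  "mpa I adj Q q 0 = ((\<lambda>i j. 1), (\<lambda>i j. 1))"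
| "mpa I adj Q q (Suc t) =
     (let W = fst (mpa I adj Q q t); H = snd (mpa I adj Q q t) in
      ((\<lambda>i j. 1 / (1 + q i / Q i j + (\<Sum>k\<in>nbrs I adj i - {j}. Q i k / Q i j * (1 - W k i)))),
       (\<lambda>i j. 1 + (\<Sum>k\<in>nbrs I adj i - {j}. W k i * H k i))))"

definition mpaW where "mpaW I adj Q q t i j = fst (mpa I adj Q q t) i j"
definition mpaH where "mpaH I adj Q q t i j = snd (mpa I adj Q q t) i j"

definition mpa_node_H where
  "mpa_node_H I adj Q q t l = 1 + (\<Sum>i\<in>nbrs I adj l. mpaW I adj Q q t i l * mpaH I adj Q q t i l)"

end

theory Submission imports Defs begin

primrec Vs :: "'a set \<Rightarrow> ('a \<Rightarrow> 'a \<Rightarrow> bool) \<Rightarrow> ('a \<Rightarrow> 'a \<Rightarrow> real) \<Rightarrow> nat \<Rightarrow> 'a \<Rightarrow> 'a \<Rightarrow> real" where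
  "Vs I adj Q 0 = (\<lambda>i j. 0)"
| "Vs I adj Q (Suc t) = (\<lambda>i j. Q i j / (1 - (\<Sum>k\<in>nbrs I adj i - {j}. Q i k * Vs I adj Q t k i)))"

locale mctx =
  fixes I :: "'a set" and adj :: "'a \<Rightarrow> 'a \<Rightarrow> bool" and Q :: "'a \<Rightarrow> 'a \<Rightarrow> real"
    and q :: "'a \<Rightarrow> real" and pp :: "'a \<Rightarrow> real" and phi :: "'a \<Rightarrow> real"
  assumes finI: "finite I"
  and adj_in: "\<And>i j. adj i j \<Longrightarrow> i \<in> I \<and> j \<in> I"
  and adj_sym: "\<And>i j. adj i j \<Longrightarrow> adj j i"
  and Qnn: "\<And>i j. i\<in>I \<Longrightarrow> j\<in>I \<Longrightarrow> Q i j \<ge> 0"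
  and qnn: "\<And>i. i\<in>I \<Longrightarrow> q i \<ge> 0"
  and Qz: "\<And>i j. i\<in>I \<Longrightarrow> j\<in>I \<Longrightarrow> Q i j = 0 \<longleftrightarrow> \<not> adj i j"
  and rows: "\<And>i. i\<in>I \<Longrightarrow> (\<Sum>j\<in>I. Q i j) + q i = 1"
  and pp_pos: "\<And>i. i\<in>I \<Longrightarrow> pp i > 0"
  and rev: "\<And>i k. i\<in>I \<Longrightarrow> k\<in>I \<Longrightarrow> pp i * Q i k = pp k * Q k i"
  and phi1: "\<And>i. i\<in>I \<Longrightarrow> phi i \<ge> 1"
  and phis: "\<And>i. i\<in>I \<Longrightarrow> (\<Sum>k\<in>I. Q i k * phi k) < phi i"
begin

abbreviation "N i \<equiv> nbrs I adj i"
abbreviation "W t \<equiv> mpaW I adj Q q t"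
abbreviation "H t \<equiv> mpaH I adj Q q t"
abbreviation "V t \<equiv> Vs I adj Q t"
definition DD :: "('a \<Rightarrow> 'a \<Rightarrow> real) \<Rightarrow> 'a \<Rightarrow> 'a \<Rightarrow> real" where
  "DD X i j = 1 - (\<Sum>k\<in>N i - {j}. Q i k * X k i)"
definition "s i = phi i - (\<Sum>k\<in>I. Q i k * phi k)"

lemma s_pos: "i \<in> I \<Longrightarrow> s i > 0" using phis[of i] by (simp add: s_def)

lemma N_mem: "k \<in> N i \<Longrightarrow> adj i k \<and> k \<in> I" by (simp add: nbrs_def)
lemma finN: "finite (N i)" using finI by (simp add: nbrs_def)

lemma Qpos: "adj i j \<Longrightarrow> Q i j > 0"
  using Qnn[of i j] Qz[of i j] adj_in[of i j] by force

lemma split: assumes "adj i j"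
  shows "(\<Sum>k\<in>I. Q i k * f k) = Q i j * f j + (\<Sum>k\<in>N i - {j}. Q i k * f k)"
proof -
  have i: "i \<in> I" using adj_in assms by blast
  have "(\<Sum>k\<in>I. Q i k * f k) = (\<Sum>k\<in>N i. Q i k * f k)"
    by (rule sum.mono_neutral_right[OF finI]) (auto simp: nbrs_def Qz[OF i])
  also have "\<dots> = Q i j * f j + (\<Sum>k\<in>N i - {j}. Q i k * f k)"
    using assms adj_in[OF assms] finN by (intro sum.remove) (auto simp: nbrs_def)
  finally show ?thesis .
qed

lemma rowN: assumes "adj i j" shows "Q i j + q i + (\<Sum>k\<in>N i - {j}. Q i k) = 1"
  using split[OF assms, of "\<lambda>_. 1"] rows[of i] adj_in[OF assms] by simp

lemma W0: "W 0 i j = 1" by (simp add: mpaW_def)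

lemma Wsuc: assumes "adj i j" shows "W (Suc t) i j = Q i j / DD (W t) i j"
proof -
  have Q: "Q i j > 0" using Qpos assms .
  let ?S1 = "\<Sum>k\<in>N i - {j}. Q i k" and ?S2 = "\<Sum>k\<in>N i - {j}. Q i k * W t k i"
  have e0: "(?S1 - ?S2) / Q i j = (\<Sum>k\<in>N i - {j}. (Q i k - Q i k * W t k i) / Q i j)"
    by (simp only: sum_divide_distrib[symmetric] sum_subtractf)
  have e: "(\<Sum>k\<in>N i - {j}. Q i k / Q i j * (1 - W t k i)) = (?S1 - ?S2) / Q i j"
    unfolding e0 by (rule sum.cong) (simp_all add: algebra_simps diff_divide_distrib)
  have "W (Suc t) i j = 1 / (1 + q i / Q i j + (\<Sum>k\<in>N i - {j}. Q i k / Q i j * (1 - W t k i)))"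
    by (simp add: mpaW_def Let_def)
  also have "\<dots> = 1 / (1 + q i / Q i j + (?S1 - ?S2) / Q i j)" by (simp only: e)
  also have "\<dots> = 1 / ((Q i j + q i + ?S1 - ?S2) / Q i j)" using Q
    by (simp add: add_divide_distrib diff_divide_distrib)
  also have "\<dots> = Q i j / (1 - ?S2)" using rowN[OF assms] by simp
  finally show ?thesis by (simp add: DD_def)
qed

lemma Hsuc: "H (Suc t) i j = 1 + (\<Sum>k\<in>N i - {j}. W t k i * H t k i)"
  by (simp add: mpaH_def mpaW_def Let_def)

lemma H0: "H 0 i j = 1" by (simp add: mpaH_def)

lemma Vsuc: "V (Suc t) i j = Q i j / DD (V t) i j" by (simp add: DD_def)

lemma DD_bounds: assumes "adj i j" and "\<And>k. adj k i \<Longrightarrow> 0 \<le> X k i \<and> X k i \<le> 1"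
  shows "Q i j \<le> DD X i j" "DD X i j \<le> 1"
proof -
  have i: "i \<in> I" using adj_in assms(1) by blast
  have "(\<Sum>k\<in>N i - {j}. Q i k * X k i) \<le> (\<Sum>k\<in>N i - {j}. Q i k)"
    apply (rule sum_mono) using assms(2) N_mem adj_sym Qnn i
    by (metis DiffD1 mult_left_le mult_left_le_one_le) 
  then show "Q i j \<le> DD X i j" using rowN[OF assms(1)] qnn[OF i] by (simp add: DD_def)
  have "0 \<le> (\<Sum>k\<in>N i - {j}. Q i k * X k i)"
    apply (rule sum_nonneg) using assms(2) N_mem adj_sym Qnn i by (metis DiffD1 mult_nonneg_nonneg)
  then show "DD X i j \<le> 1" by (simp add: DD_def)
qed

lemma DD_anti: assumes "\<And>k. adj k i \<Longrightarrow> X k i \<le> Y k i" and i: "i \<in> I"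
  shows "DD Y i j \<le> DD X i j"
proof -
  have "(\<Sum>k\<in>N i - {j}. Q i k * X k i) \<le> (\<Sum>k\<in>N i - {j}. Q i k * Y k i)"
    apply (rule sum_mono) using assms N_mem adj_sym Qnn i by (meson DiffD1 mult_left_mono)
  then show ?thesis by (simp add: DD_def)
qed

lemma Wbounds: "adj i j \<Longrightarrow> 0 < W t i j \<and> W t i j \<le> 1"
proof (induction t arbitrary: i j)
  case 0 then show ?case by (simp add: W0)
next
  case (Suc t)
  have "Q i j \<le> DD (W t) i j" by (rule DD_bounds(1)[OF Suc.prems]) (use Suc.IH in force)
  then show ?case using Qpos[OF Suc.prems] Wsuc[OF Suc.prems] by (simp add: divide_le_eq_1)
qed

lemma Wdec: "adj i j \<Longrightarrow> W (Suc t) i j \<le> W t i j"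
proof (induction t arbitrary: i j)
  case 0 then show ?case using Wbounds[OF 0] by (simp add: W0)
next
  case (Suc t)
  have i: "i \<in> I" using adj_in Suc.prems by blast
  have a: "DD (W t) i j \<le> DD (W (Suc t)) i j" by (rule DD_anti[OF Suc.IH i])
  have "Q i j \<le> DD (W t) i j" by (rule DD_bounds(1)[OF Suc.prems]) (metis Wbounds less_imp_le)
  then show ?case using Qpos[OF Suc.prems] a Wsuc[OF Suc.prems, of t] Wsuc[OF Suc.prems, of "Suc t"]
    by (simp add: frac_le)
qed


definition "Wst i j = lim (\<lambda>t. W t i j)"
definition "Vst i j = lim (\<lambda>t. V t i j)"

lemma Wlim: assumes "adj i j" shows "(\<lambda>t. W t i j) \<longlonglongrightarrow> Wst i j" "\<And>t. Wst i j \<le> W t i j"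
proof -
  have d: "decseq (\<lambda>t. W t i j)" by (rule decseq_SucI) (rule Wdec[OF assms])
  obtain L where L: "(\<lambda>t. W t i j) \<longlonglongrightarrow> L" "\<forall>t. L \<le> W t i j"
    using decseq_convergent[OF d, of 0] Wbounds[OF assms] by (metis less_imp_le)
  have "Wst i j = L" unfolding Wst_def using L(1) by (rule limI)
  then show "(\<lambda>t. W t i j) \<longlonglongrightarrow> Wst i j" "\<And>t. Wst i j \<le> W t i j" using L by auto
qed

lemma Wst_bounds: "adj i j \<Longrightarrow> 0 \<le> Wst i j \<and> Wst i j \<le> 1"
proof
  assume a: "adj i j"
  show "0 \<le> Wst i j"
    using Wlim(1)[OF a] by (rule LIMSEQ_le_const) (use Wbounds[OF a] less_imp_le in blast)
  show "Wst i j \<le> 1" using Wlim(2)[OF a, of 0] by (simp add: W0)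
qed

lemma DDlim: assumes "\<And>k. adj k i \<Longrightarrow> (\<lambda>t. X t k i) \<longlonglongrightarrow> Y k i"
  shows "(\<lambda>t. DD (X t) i j) \<longlonglongrightarrow> DD Y i j"
  unfolding DD_def
  by (intro tendsto_intros) (use assms N_mem adj_sym in blast)

lemma Wst_fix: assumes "adj i j" shows "Q i j \<le> DD Wst i j" "Wst i j = Q i j / DD Wst i j"
proof -
  show q: "Q i j \<le> DD Wst i j" by (rule DD_bounds(1)[OF assms]) (use Wst_bounds in blast)
  have "(\<lambda>t. W (Suc t) i j) \<longlonglongrightarrow> Q i j / DD Wst i j"
    unfolding Wsuc[OF assms]
    by (intro tendsto_intros DDlim) (use Wlim(1) Qpos[OF assms] q in auto)
  moreover have "(\<lambda>t. W (Suc t) i j) \<longlonglongrightarrow> Wst i j" using Wlim(1)[OF assms] by (rule LIMSEQ_Suc)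
  ultimately show "Wst i j = Q i j / DD Wst i j" using LIMSEQ_unique by blast
qed

lemma DDphi: assumes "adj i j" and X: "\<And>k. adj k i \<Longrightarrow> 0 \<le> X k i \<and> X k i * phi i \<le> phi k"
  shows "(s i + Q i j * phi j) / phi i \<le> DD X i j"
proof -
  have i: "i \<in> I" and j: "j \<in> I" using adj_in assms(1) by auto
  have p: "phi i > 0" using phi1[OF i] by simp
  have "(\<Sum>k\<in>N i - {j}. Q i k * X k i) \<le> (\<Sum>k\<in>N i - {j}. Q i k * phi k / phi i)"
  proof (rule sum_mono)
    fix k assume "k \<in> N i - {j}"
    then have k: "adj k i" "k \<in> I" using N_mem adj_sym by auto
    have "X k i \<le> phi k / phi i" using X[OF k(1)] p by (simp add: le_divide_eq)
    then show "Q i k * X k i \<le> Q i k * phi k / phi i"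
      using Qnn[OF i k(2)] by (metis mult_left_mono times_divide_eq_right)
  qed
  also have "\<dots> = (\<Sum>k\<in>N i - {j}. Q i k * phi k) / phi i" by (simp add: sum_divide_distrib)
  also have "\<dots> = (phi i - s i - Q i j * phi j) / phi i"
    using split[OF assms(1), of phi] by (simp add: s_def)
  finally have "(\<Sum>k\<in>N i - {j}. Q i k * X k i) \<le> (phi i - s i - Q i j * phi j) / phi i" .
  moreover have "(s i + Q i j * phi j)/phi i = 1 - (phi i - s i - Q i j * phi j)/phi i"
    using p by (simp add: diff_divide_distrib add_divide_distrib)
  ultimately show ?thesis unfolding DD_def by linarith
qed

lemma DDphi_pos: assumes "adj i j" shows "0 < (s i + Q i j * phi j) / phi i"
proof -
  have i: "i \<in> I" and j: "j \<in> I" using adj_in assms(1) by auto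
  show ?thesis using s_pos[OF i] Qnn[OF i j] phi1[OF i] phi1[OF j]
    by (intro divide_pos_pos add_pos_nonneg mult_nonneg_nonneg) auto
qed


lemma Vb: "adj i j \<Longrightarrow> 0 \<le> V t i j \<and> V t i j * phi j \<le> phi i"
proof (induction t arbitrary: i j)
  case 0 then show ?case using phi1 adj_in by force
next
  case (Suc t)
  have i: "i \<in> I" and j: "j \<in> I" using adj_in Suc.prems by auto
  have d: "(s i + Q i j * phi j) / phi i \<le> DD (V t) i j" by (rule DDphi[OF Suc.prems]) (use Suc.IH in blast)
  have dp: "0 < DD (V t) i j" using d DDphi_pos[OF Suc.prems] by linarith
  have Q: "0 < Q i j" using Qpos[OF Suc.prems] .
  have p: "phi i > 0" "phi j > 0" using phi1[OF i] phi1[OF j] by auto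
  have "V (Suc t) i j * phi j = Q i j * phi j / DD (V t) i j" by (simp add: Vsuc del: Vs.simps)
  also have "\<dots> \<le> Q i j * phi j / ((s i + Q i j * phi j) / phi i)"
    using d DDphi_pos[OF Suc.prems] Q p dp s_pos[OF i]
    by (intro divide_left_mono) (auto intro!: divide_pos_pos mult_pos_pos add_pos_pos)
  also have "\<dots> = phi i * (Q i j * phi j / (s i + Q i j * phi j))" using p by simp
  also have "\<dots> \<le> phi i * 1"
    using p s_pos[OF i] Q by (intro mult_left_mono) (auto simp: divide_le_eq_1 intro!: add_pos_pos)
  finally show ?case using dp Q by (simp add: Vsuc del: Vs.simps)
qed

lemma DDV_low: "adj i j \<Longrightarrow> (s i + Q i j * phi j) / phi i \<le> DD (V t) i j"
  by (rule DDphi) (use Vb in auto)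

lemma Vmono: "adj i j \<Longrightarrow> V t i j \<le> V (Suc t) i j"
proof (induction t arbitrary: i j)
  case 0 then show ?case using Vb[OF 0, of "Suc 0"] by simp
next
  case (Suc t)
  have i: "i \<in> I" using adj_in Suc.prems by auto
  have a: "DD (V (Suc t)) i j \<le> DD (V t) i j" by (rule DD_anti[OF Suc.IH i])
  have "0 < DD (V (Suc t)) i j" using DDV_low[where t="Suc t", OF Suc.prems] DDphi_pos[OF Suc.prems] by linarith
  then show ?case using a Qpos[OF Suc.prems] by (simp add: Vsuc[of "Suc t"] Vsuc[of t] frac_le del: Vs.simps)
qed

lemma VleW: "adj i j \<Longrightarrow> V t i j \<le> W t i j"
proof (induction t arbitrary: i j)
  case 0 then show ?case by (simp add: W0)
next
  case (Suc t)
  have i: "i \<in> I" using adj_in Suc.prems by auto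
  have a: "DD (W t) i j \<le> DD (V t) i j" by (rule DD_anti[OF Suc.IH i])
  have "0 < DD (W t) i j"
    using DD_bounds(1)[OF Suc.prems, of "W t"] Wbounds Qpos[OF Suc.prems] by (metis less_imp_le order.strict_trans2)
  then show ?case using a Qpos[OF Suc.prems] by (simp add: Vsuc Wsuc[OF Suc.prems] frac_le del: Vs.simps)
qed

lemma Vlim: assumes "adj i j" shows "(\<lambda>t. V t i j) \<longlonglongrightarrow> Vst i j"
proof -
  have d: "incseq (\<lambda>t. V t i j)" by (rule incseq_SucI) (rule Vmono[OF assms])
  obtain L where L: "(\<lambda>t. V t i j) \<longlonglongrightarrow> L"
    using incseq_convergent[OF d, of 1] VleW[OF assms] Wbounds[OF assms] by (meson order.trans)
  have "Vst i j = L" unfolding Vst_def using L(1) by (rule limI)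
  then show ?thesis using L by auto
qed

lemma Vst_props: assumes "adj i j"
  shows "0 \<le> Vst i j" "Vst i j * phi j \<le> phi i" "Vst i j \<le> Wst i j"
proof -
  show "0 \<le> Vst i j" using Vlim[OF assms] by (rule LIMSEQ_le_const) (use Vb[OF assms] in blast)
  have "(\<lambda>t. V t i j * phi j) \<longlonglongrightarrow> Vst i j * phi j" using Vlim[OF assms] by (intro tendsto_intros)
  then show "Vst i j * phi j \<le> phi i" by (rule LIMSEQ_le_const2) (use Vb[OF assms] in blast)
  show "Vst i j \<le> Wst i j" using Vlim[OF assms] Wlim(1)[OF assms]
    by (rule LIMSEQ_le) (use VleW[OF assms] in blast)
qed

lemma Vst_fix: assumes "adj i j"
  shows "(s i + Q i j * phi j) / phi i \<le> DD Vst i j" "Vst i j = Q i j / DD Vst i j"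
proof -
  show q: "(s i + Q i j * phi j) / phi i \<le> DD Vst i j"
    by (rule DDphi[OF assms]) (use Vst_props in blast)
  have "(\<lambda>t. V (Suc t) i j) \<longlonglongrightarrow> Q i j / DD Vst i j"
    unfolding Vsuc
    by (intro tendsto_intros DDlim) (use Vlim DDphi_pos[OF assms] q in auto)
  moreover have "(\<lambda>t. V (Suc t) i j) \<longlonglongrightarrow> Vst i j" using Vlim[OF assms] by (rule LIMSEQ_Suc)
  ultimately show "Vst i j = Q i j / DD Vst i j" using LIMSEQ_unique by blast
qed


lemma sumQ: assumes "adj i j"
  shows "(\<Sum>k\<in>N i - {j}. Q i k * (phi k - X k i * phi i)) = phi i * DD X i j - Q i j * phi j - s i"
proof -
  have "(\<Sum>k\<in>N i - {j}. Q i k * (phi k - X k i * phi i))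
      = (\<Sum>k\<in>N i - {j}. Q i k * phi k - phi i * (Q i k * X k i))"
    by (rule sum.cong) (simp_all add: algebra_simps)
  also have "\<dots> = (\<Sum>k\<in>N i - {j}. Q i k * phi k) - phi i * (\<Sum>k\<in>N i - {j}. Q i k * X k i)"
    by (simp add: sum_subtractf sum_distrib_left)
  also have "(\<Sum>k\<in>N i - {j}. Q i k * phi k) = phi i - s i - Q i j * phi j"
    using split[OF assms, of phi] by (simp add: s_def)
  finally show ?thesis unfolding DD_def by (simp add: algebra_simps)
qed

lemma Yid: assumes "adj i j" and "X i j * DD X i j = Q i j"
  shows "DD X i j * (phi i - X i j * phi j) = s i + (\<Sum>k\<in>N i - {j}. Q i k * (phi k - X k i * phi i))"
  unfolding sumQ[OF assms(1)] using assms(2) by (simp add: algebra_simps)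

lemma DDV_pos: "adj i j \<Longrightarrow> 0 < DD Vst i j"
  using Vst_fix(1) DDphi_pos by (meson order.strict_trans2)

lemma DDW_pos: "adj i j \<Longrightarrow> 0 < DD Wst i j"
  using Wst_fix(1) Qpos by (meson order.strict_trans2)

lemma VstDD: "adj i j \<Longrightarrow> Vst i j * DD Vst i j = Q i j"
  using Vst_fix(2) DDV_pos by (metis nonzero_eq_divide_eq order_less_irrefl)

lemma WstDD: "adj i j \<Longrightarrow> Wst i j * DD Wst i j = Q i j"
  using Wst_fix(2) DDW_pos by (metis nonzero_eq_divide_eq order_less_irrefl)

lemma YV_pos: assumes "adj i j" shows "0 < phi i - Vst i j * phi j"
proof -
  have i: "i \<in> I" using adj_in assms by auto
  have "0 \<le> (\<Sum>k\<in>N i - {j}. Q i k * (phi k - Vst k i * phi i))"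
    apply (rule sum_nonneg) using N_mem adj_sym Vst_props(2) Qnn i
    by (metis DiffD1 diff_ge_0_iff_ge mult_nonneg_nonneg)
  then have "0 < DD Vst i j * (phi i - Vst i j * phi j)"
    using Yid[OF assms VstDD[OF assms]] s_pos[OF i] by linarith
  then show ?thesis using DDV_pos[OF assms] by (simp add: zero_less_mult_iff)
qed

lemma WeqV: assumes "adj i j" shows "Wst i j = Vst i j"
proof (rule ccontr)
  assume ne: "Wst i j \<noteq> Vst i j"
  define E where "E = {(a,b). adj a b}"
  have finE: "finite E"
    by (rule finite_subset[of _ "I \<times> I"]) (use adj_in finI in \<open>auto simp: E_def\<close>)
  define Y where "Y a b = phi a - Vst a b * phi b" for a b
  define Dl where "Dl a b = Wst a b - Vst a b" for a b
  define f where "f e = Dl (fst e) (snd e) / Y (fst e) (snd e)" for e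
  have Ypos: "\<And>a b. adj a b \<Longrightarrow> 0 < Y a b" using YV_pos by (simp add: Y_def)
  have Dlnn: "\<And>a b. adj a b \<Longrightarrow> 0 \<le> Dl a b" using Vst_props(3) by (simp add: Dl_def)
  have ij: "(i,j) \<in> E" using assms by (simp add: E_def)
  define c where "c = Max (f ` E)"
  have fle: "\<And>e. e \<in> E \<Longrightarrow> f e \<le> c" unfolding c_def using finE by auto
  have "c \<in> f ` E" unfolding c_def using finE ij by (intro Max_in) auto
  then obtain a b where ab: "adj a b" "f (a,b) = c" by (auto simp: E_def)
  have "0 < Dl i j" using Dlnn[OF assms] ne by (simp add: Dl_def)
  then have "0 < f (i,j)" using Ypos[OF assms] by (simp add: f_def)
  then have cpos: "0 < c" using fle[OF ij] by linarith
  have bound: "\<And>x y. adj x y \<Longrightarrow> Dl x y \<le> c * Y x y"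
  proof -
    fix x y assume xy: "adj x y"
    have "Dl x y / Y x y \<le> c" using fle[of "(x,y)"] xy by (simp add: f_def E_def)
    then show "Dl x y \<le> c * Y x y" using Ypos[OF xy] by (simp add: divide_le_eq)
  qed
  have a: "a \<in> I" using adj_in ab by auto
  have eq0: "Dl a b = c * Y a b" using ab(2) Ypos[OF ab(1)] by (simp add: f_def field_simps)
  let ?DW = "DD Wst a b" and ?DV = "DD Vst a b"
  have DVp: "0 < ?DV" using DDV_pos[OF ab(1)] .
  have DWp: "0 < ?DW" using DDW_pos[OF ab(1)] .
  have diff: "?DV - ?DW = (\<Sum>k\<in>N a - {b}. Q a k * Dl k a)"
    unfolding DD_def Dl_def by (simp add: sum_subtractf[symmetric] right_diff_distrib)
  have sQY: "(\<Sum>k\<in>N a - {b}. Q a k * Y k a) = ?DV * Y a b - s a"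
    using Yid[OF ab(1) VstDD[OF ab(1)]] by (simp add: Y_def)
  have sQY0: "0 \<le> (\<Sum>k\<in>N a - {b}. Q a k * Y k a)"
    apply (rule sum_nonneg) using N_mem adj_sym Ypos Qnn a
    by (metis DiffD1 less_imp_le mult_nonneg_nonneg)
  have "(\<Sum>k\<in>N a - {b}. Q a k * Dl k a) \<le> (\<Sum>k\<in>N a - {b}. Q a k * (c * Y k a))"
    apply (rule sum_mono) using N_mem adj_sym bound Qnn a
    by (metis DiffD1 mult_left_mono)
  moreover have "(\<Sum>k\<in>N a - {b}. Q a k * (c * Y k a)) = c * (\<Sum>k\<in>N a - {b}. Q a k * Y k a)"
    unfolding sum_distrib_left by (rule sum.cong) simp_all
  ultimately have sD: "?DV - ?DW \<le> c * (?DV * Y a b - s a)"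
    unfolding diff sQY[symmetric] by linarith
  have DlW: "Dl a b = Wst a b * (?DV - ?DW) / ?DV"
  proof -
    have "Wst a b = Q a b / ?DW" "Vst a b = Q a b / ?DV" using Wst_fix(2)[OF ab(1)] Vst_fix(2)[OF ab(1)] by auto
    then show ?thesis using DVp DWp unfolding Dl_def by (simp add: field_simps)
  qed
  have W01: "0 \<le> Wst a b" "Wst a b \<le> 1" using Wst_bounds[OF ab(1)] by auto
  have ddnn: "0 \<le> ?DV - ?DW" using diff Dlnn N_mem adj_sym Qnn a
    by (metis (no_types, lifting) DiffD1 mult_nonneg_nonneg sum_nonneg)
  have "Dl a b \<le> (?DV - ?DW) / ?DV" unfolding DlW using W01 ddnn DVp
    by (simp add: divide_right_mono mult_left_le_one_le)
  also have "\<dots> \<le> c * (?DV * Y a b - s a) / ?DV" using sD DVp by (simp add: divide_right_mono)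
  also have "\<dots> = c * Y a b - c * s a / ?DV" using DVp by (simp add: field_simps)
  also have "\<dots> < c * Y a b" using cpos s_pos[OF a] DVp by simp
  finally show False using eq0 by simp
qed

lemma YW_pos: "adj i j \<Longrightarrow> 0 < phi i - Wst i j * phi j"
  using YV_pos WeqV by simp

definition hh :: "nat \<Rightarrow> 'a \<Rightarrow> 'a \<Rightarrow> real" where
  "hh t i j = pp i * (DD (W t) i j * phi i - Q i j * phi j)"

lemma hh_rec: assumes "adj i j"
  shows "hh (Suc t) i j = pp i * s i + (\<Sum>k\<in>N i - {j}. W (Suc t) k i * hh t k i)"
proof -
  have i: "i \<in> I" using adj_in assms by auto
  have "(\<Sum>k\<in>N i - {j}. W (Suc t) k i * hh t k i)
      = (\<Sum>k\<in>N i - {j}. pp i * (Q i k * (phi k - W (Suc t) k i * phi i)))"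
  proof (rule sum.cong)
    fix k assume "k \<in> N i - {j}"
    then have k: "adj k i" "k \<in> I" using N_mem adj_sym by auto
    have dp: "0 < DD (W t) k i" using DD_bounds(1)[OF k(1), of "W t"] Wbounds Qpos[OF k(1)]
      by (metis less_imp_le order.strict_trans2)
    have w: "W (Suc t) k i * DD (W t) k i = Q k i" using Wsuc[OF k(1)] dp by simp
    have "W (Suc t) k i * hh t k i = pp k * Q k i * (phi k - W (Suc t) k i * phi i)"
      unfolding hh_def using w by (simp add: algebra_simps)
    also have "\<dots> = pp i * (Q i k * (phi k - W (Suc t) k i * phi i))" using rev[OF i k(2)] by simp
    finally show "W (Suc t) k i * hh t k i = pp i * (Q i k * (phi k - W (Suc t) k i * phi i))" .
  qed simp
  also have "\<dots> = pp i * (phi i * DD (W (Suc t)) i j - Q i j * phi j - s i)"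
    by (simp add: sum_distrib_left[symmetric] sumQ[OF assms])
  finally show ?thesis unfolding hh_def by (simp add: algebra_simps)
qed

lemma hh_le: assumes "adj i j" shows "hh t i j \<le> pp i * phi i"
proof -
  have i: "i \<in> I" and j: "j \<in> I" using adj_in assms by auto
  have d1: "DD (W t) i j \<le> 1" by (rule DD_bounds(2)[OF assms]) (metis Wbounds less_imp_le)
  have d0: "Q i j \<le> DD (W t) i j" by (rule DD_bounds(1)[OF assms]) (metis Wbounds less_imp_le)
  have "DD (W t) i j * phi i \<le> phi i"
    using d1 d0 phi1[OF i] Qnn[OF i j] by (intro mult_left_le_one_le) auto
  moreover have "0 \<le> Q i j * phi j" using phi1[OF j] Qnn[OF i j] by simp
  ultimately have "DD (W t) i j * phi i - Q i j * phi j \<le> phi i" by linarith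
  then show ?thesis unfolding hh_def using pp_pos[OF i] by simp
qed

lemma hh_ev: "\<exists>t0. \<forall>i j. adj i j \<longrightarrow> 0 < hh t0 i j"
proof -
  define E where "E = {(a,b). adj a b}"
  have finE: "finite E"
    by (rule finite_subset[of _ "I \<times> I"]) (use adj_in finI in \<open>auto simp: E_def\<close>)
  have "\<forall>e\<in>E. eventually (\<lambda>t. 0 < hh t (fst e) (snd e)) sequentially"
  proof
    fix e assume "e \<in> E"
    then obtain i j where e: "e = (i,j)" "adj i j" by (auto simp: E_def)
    have i: "i \<in> I" using adj_in e by auto
    have lim: "(\<lambda>t. hh t i j) \<longlonglongrightarrow> pp i * (DD Wst i j * phi i - Q i j * phi j)"
      unfolding hh_def by (intro tendsto_intros DDlim Wlim(1))
    have "DD Wst i j * phi i - Q i j * phi j = DD Wst i j * (phi i - Wst i j * phi j)"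
      using WstDD[OF e(2)] by (simp add: algebra_simps)
    then have "0 < pp i * (DD Wst i j * phi i - Q i j * phi j)"
      using DDW_pos[OF e(2)] YW_pos[OF e(2)] pp_pos[OF i] by simp
    from order_tendstoD(1)[OF lim this] show "eventually (\<lambda>t. 0 < hh t (fst e) (snd e)) sequentially"
      using e by simp
  qed
  from eventually_ball_finite[OF finE this] obtain t0 where "\<forall>t\<ge>t0. \<forall>e\<in>E. 0 < hh t (fst e) (snd e)"
    by (auto simp: eventually_sequentially)
  then show ?thesis by (auto simp: E_def)
qed


lemma H_ge1: "1 \<le> H t i j"
proof (induction t arbitrary: i j)
  case 0 then show ?case by (simp add: H0)
next
  case (Suc t)
  have "0 \<le> (\<Sum>k\<in>N i - {j}. W t k i * H t k i)"
  proof (rule sum_nonneg)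
    fix k assume "k \<in> N i - {j}"
    then have "adj k i" using N_mem adj_sym by auto
    then show "0 \<le> W t k i * H t k i" using Wbounds Suc.IH[of k i]
      by (metis less_imp_le mult_nonneg_nonneg order.trans zero_le_one)
  qed
  then show ?case by (simp add: Hsuc)
qed

lemma Dl_rec: assumes "adj i j"
  shows "H (Suc (Suc t)) i j - H (Suc t) i j \<le> (\<Sum>k\<in>N i - {j}. W (Suc t) k i * (H (Suc t) k i - H t k i))"
proof -
  have "(\<Sum>k\<in>N i - {j}. W (Suc t) k i * H t k i) \<le> (\<Sum>k\<in>N i - {j}. W t k i * H t k i)"
  proof (rule sum_mono)
    fix k assume "k \<in> N i - {j}"
    then have "adj k i" using N_mem adj_sym by auto
    then show "W (Suc t) k i * H t k i \<le> W t k i * H t k i"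
      using Wdec H_ge1[of t k i] by (intro mult_right_mono) auto
  qed
  then show ?thesis
    by (simp only: Hsuc[of "Suc t"] Hsuc[of t] right_diff_distrib sum_subtractf)
qed

lemma H_conv: assumes "adj i0 j0" shows "convergent (\<lambda>t. H t i0 j0)"
proof -
  obtain t0 where t0: "\<And>i j. adj i j \<Longrightarrow> 0 < hh t0 i j" using hh_ev by blast
  define E where "E = {(a,b). adj a b}"
  have finE: "finite E"
    by (rule finite_subset[of _ "I \<times> I"]) (use adj_in finI in \<open>auto simp: E_def\<close>)
  define Dl where "Dl t a b = H (Suc t) a b - H t a b" for t a b
  define c where "c = (\<Sum>e\<in>E. \<bar>Dl t0 (fst e) (snd e)\<bar> / hh t0 (fst e) (snd e))"
  define B where "B = (\<Sum>i\<in>I. pp i * phi i)"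
  define m where "m = Min ((\<lambda>i. pp i * s i) ` I)"
  have I0: "I \<noteq> {}" using adj_in assms by auto
  have cnn: "0 \<le> c" unfolding c_def
    by (rule sum_nonneg) (use t0 in \<open>auto simp: E_def intro!: divide_nonneg_pos\<close>)
  have nn: "\<And>x. x \<in> I \<Longrightarrow> 0 \<le> pp x * phi x" using pp_pos phi1
    by (metis less_imp_le mult_nonneg_nonneg order.trans zero_le_one)
  have Bge: "\<And>i. i \<in> I \<Longrightarrow> pp i * phi i \<le> B" unfolding B_def
    by (rule member_le_sum) (use nn finI in auto)
  have mle: "\<And>i. i \<in> I \<Longrightarrow> m \<le> pp i * s i" unfolding m_def using finI by auto
  have mpos: "0 < m" unfolding m_def using finI I0 pp_pos s_pos
    by (subst Min_gr_iff) auto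
  obtain i1 where i1: "i1 \<in> I" using I0 by auto
  have "s i1 \<le> phi i1"
  proof -
    have "0 \<le> (\<Sum>k\<in>I. Q i1 k * phi k)" using Qnn phi1 i1
      by (intro sum_nonneg) (metis mult_nonneg_nonneg order.trans zero_le_one)
    then show ?thesis by (simp add: s_def)
  qed
  then have "m \<le> B" using mle[OF i1] Bge[OF i1] pp_pos[OF i1]
    by (smt (verit) mult_left_mono)
  then have Bpos: "0 < B" using mpos by linarith
  define g where "g = 1 - m / B"
  have g0: "0 \<le> g" "g < 1" using \<open>m \<le> B\<close> Bpos mpos by (auto simp: g_def)
  have key: "\<And>a b. adj a b \<Longrightarrow> hh (Suc t) a b - pp a * s a \<le> g * hh (Suc t) a b" for t
  proof -
    fix a b assume ab: "adj a b"
    have a: "a \<in> I" using adj_in ab by auto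
    have "(m / B) * hh (Suc t) a b \<le> (m / B) * B"
      using hh_le[OF ab, of "Suc t"] Bge[OF a] mpos Bpos by (intro mult_left_mono) auto
    then have "(m / B) * hh (Suc t) a b \<le> pp a * s a" using Bpos mle[OF a] by simp
    then show "hh (Suc t) a b - pp a * s a \<le> g * hh (Suc t) a b" by (simp add: g_def algebra_simps)
  qed
  have claim: "\<forall>a b. adj a b \<longrightarrow> Dl (t0 + n) a b \<le> c * g ^ n * hh (t0 + n) a b" for n
  proof (induction n)
    case 0
    show ?case
    proof (intro allI impI)
      fix a b assume ab: "adj a b"
      have hp: "0 < hh t0 a b" using t0[OF ab] .
      have "(\<lambda>e. \<bar>Dl t0 (fst e) (snd e)\<bar> / hh t0 (fst e) (snd e)) (a,b)
          \<le> (\<Sum>e\<in>E. \<bar>Dl t0 (fst e) (snd e)\<bar> / hh t0 (fst e) (snd e))"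
      proof (rule member_le_sum)
        show "(a,b) \<in> E" using ab by (simp add: E_def)
        show "finite E" by (rule finE)
        fix e assume "e \<in> E - {(a,b)}"
        then have "adj (fst e) (snd e)" by (auto simp: E_def)
        then show "0 \<le> \<bar>Dl t0 (fst e) (snd e)\<bar> / hh t0 (fst e) (snd e)"
          using t0 by (intro divide_nonneg_pos) auto
      qed
      then have "\<bar>Dl t0 a b\<bar> / hh t0 a b \<le> c" by (simp add: c_def)
      then have "\<bar>Dl t0 a b\<bar> \<le> c * hh t0 a b" using hp by (simp add: divide_le_eq)
      then show "Dl (t0 + 0) a b \<le> c * g ^ 0 * hh (t0 + 0) a b" by simp
    qed
  next
    case (Suc n)
    show ?case
    proof (intro allI impI)
      fix a b assume ab: "adj a b"
      have cg: "0 \<le> c * g ^ n" using cnn g0 by simp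
      have "Dl (t0 + Suc n) a b \<le> (\<Sum>k\<in>N a - {b}. W (Suc (t0 + n)) k a * Dl (t0 + n) k a)"
        using Dl_rec[OF ab, of "t0 + n"] by (simp add: Dl_def)
      also have "\<dots> \<le> (\<Sum>k\<in>N a - {b}. W (Suc (t0 + n)) k a * (c * g ^ n * hh (t0 + n) k a))"
      proof (rule sum_mono)
        fix k assume "k \<in> N a - {b}"
        then have "adj k a" using N_mem adj_sym by auto
        then show "W (Suc (t0 + n)) k a * Dl (t0 + n) k a \<le> W (Suc (t0 + n)) k a * (c * g ^ n * hh (t0 + n) k a)"
          using Suc.IH Wbounds by (intro mult_left_mono) (auto intro: less_imp_le)
      qed
      also have "\<dots> = c * g ^ n * (\<Sum>k\<in>N a - {b}. W (Suc (t0 + n)) k a * hh (t0 + n) k a)"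
        unfolding sum_distrib_left by (rule sum.cong) simp_all
      also have "\<dots> = c * g ^ n * (hh (Suc (t0 + n)) a b - pp a * s a)"
        using hh_rec[OF ab, of "t0 + n"] by simp
      also have "\<dots> \<le> c * g ^ n * (g * hh (Suc (t0 + n)) a b)"
        using key[OF ab] cg by (intro mult_left_mono) auto
      finally show "Dl (t0 + Suc n) a b \<le> c * g ^ Suc n * hh (t0 + Suc n) a b"
        by (simp add: algebra_simps)
    qed
  qed
  define G where "G n = H (t0 + n) i0 j0 + c * B * g ^ n / (1 - g)" for n
  have Gdec: "decseq G"
  proof (rule decseq_SucI)
    fix n
    have "Dl (t0 + n) i0 j0 \<le> c * g ^ n * hh (t0 + n) i0 j0" using claim assms by blast
    also have "\<dots> \<le> c * g ^ n * B"
      using hh_le[OF assms] Bge adj_in[OF assms] cnn g0 by (intro mult_left_mono) (auto intro: order.trans)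
    finally have d: "H (t0 + Suc n) i0 j0 \<le> H (t0 + n) i0 j0 + c * g ^ n * B" by (simp add: Dl_def)
    have "c * B * g ^ Suc n / (1 - g) + c * g ^ n * B = c * B * g ^ n / (1 - g)"
      using g0 by (simp add: field_simps)
    then show "G (Suc n) \<le> G n" using d unfolding G_def by linarith
  qed
  have Gnn: "\<forall>n. 0 \<le> G n"
  proof
    fix n
    have "0 \<le> c * B * g ^ n / (1 - g)" using cnn Bpos g0 by simp
    then show "0 \<le> G n" using H_ge1[of "t0 + n" i0 j0] unfolding G_def by linarith
  qed
  obtain L where L: "G \<longlonglongrightarrow> L" using decseq_convergent[OF Gdec Gnn] by blast
  have "(\<lambda>n. G n - c * B / (1 - g) * g ^ n) \<longlonglongrightarrow> L - c * B / (1 - g) * 0"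
    using g0 by (intro tendsto_intros L LIMSEQ_power_zero) auto
  moreover have "(\<lambda>n. G n - c * B / (1 - g) * g ^ n) = (\<lambda>n. H (n + t0) i0 j0)"
    by (rule ext) (simp add: G_def add.commute)
  ultimately have "(\<lambda>n. H (n + t0) i0 j0) \<longlonglongrightarrow> L" by simp
  then show ?thesis using LIMSEQ_offset convergent_def by blast
qed

lemma W_conv: "adj i j \<Longrightarrow> convergent (\<lambda>t. W t i j)"
  using Wlim(1) convergent_def by blast

lemma node_conv: assumes "l \<in> I" shows "convergent (\<lambda>t. mpa_node_H I adj Q q t l)"
proof -
  have "\<forall>i\<in>N l. convergent (\<lambda>t. W t i l * H t i l)"
  proof
    fix i assume "i \<in> N l"
    then have "adj i l" using N_mem adj_sym by auto
    then show "convergent (\<lambda>t. W t i l * H t i l)" using W_conv H_conv convergent_mult by blast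
  qed
  then have "convergent (\<lambda>t. \<Sum>i\<in>N l. W t i l * H t i l)"
    by (intro convergent_sum) auto
  then show ?thesis unfolding mpa_node_H_def using convergent_add convergent_const by blast
qed

end

fun pw :: "'a set \<Rightarrow> ('a \<Rightarrow> 'a \<Rightarrow> real) \<Rightarrow> nat \<Rightarrow> 'a \<Rightarrow> real" where
  "pw I Q 0 i = 1"
| "pw I Q (Suc n) i = (\<Sum>k\<in>I. Q i k * pw I Q n k)"

lemma phi_exists:
  fixes I :: "'a set" and Q :: "'a \<Rightarrow> 'a \<Rightarrow> real"
  assumes finI: "finite I"
    and adj_in: "\<And>i j. adj i j \<Longrightarrow> i \<in> I \<and> j \<in> I"
    and connected: "\<forall>i\<in>I. \<forall>j\<in>I. adj\<^sup>*\<^sup>* i j"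
    and Qnn: "\<And>i j. i\<in>I \<Longrightarrow> j\<in>I \<Longrightarrow> Q i j \<ge> 0"
    and qnn: "\<And>i. i\<in>I \<Longrightarrow> q i \<ge> 0"
    and Qz: "\<And>i j. i\<in>I \<Longrightarrow> j\<in>I \<Longrightarrow> Q i j = 0 \<longleftrightarrow> \<not> adj i j"
    and rows: "\<And>i. i\<in>I \<Longrightarrow> (\<Sum>j\<in>I. Q i j) + q i = 1"
    and q_nz: "\<exists>i\<in>I. q i \<noteq> 0"
  shows "\<exists>phi. \<forall>i\<in>I. 1 \<le> phi i \<and> (\<Sum>k\<in>I. Q i k * phi k) < phi i"
proof -
  let ?p = "pw I Q"
  have rowle: "\<And>i. i \<in> I \<Longrightarrow> (\<Sum>k\<in>I. Q i k) \<le> 1" using rows qnn by (metis le_add_same_cancel1)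
  have pwb: "\<And>i. i \<in> I \<Longrightarrow> 0 \<le> ?p n i \<and> ?p n i \<le> 1" for n
  proof (induction n)
    case 0 then show ?case by simp
  next
    case (Suc n)
    have "(\<Sum>k\<in>I. Q i k * ?p n k) \<le> (\<Sum>k\<in>I. Q i k)"
      by (rule sum_mono) (use Suc.IH Qnn Suc.prems in \<open>auto intro: mult_left_le\<close>)
    moreover have "0 \<le> (\<Sum>k\<in>I. Q i k * ?p n k)"
      by (rule sum_nonneg) (use Suc.IH Qnn Suc.prems in auto)
    ultimately show ?case using rowle[OF Suc.prems] by simp
  qed
  have lt: "(adj ^^ n) i p \<Longrightarrow> i \<in> I \<Longrightarrow> p \<in> I \<Longrightarrow> q p \<noteq> 0 \<Longrightarrow> n < m \<Longrightarrow> ?p m i < 1" for n i p m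
  proof (induction n arbitrary: i m)
    case 0
    then obtain m' where m: "m = Suc m'" by (cases m) auto
    have ip: "i = p" using 0 by simp
    have "(\<Sum>k\<in>I. Q i k * ?p m' k) \<le> (\<Sum>k\<in>I. Q i k)"
      by (rule sum_mono) (use pwb Qnn 0 in \<open>auto intro: mult_left_le\<close>)
    moreover have "0 < q i" using qnn[OF \<open>i\<in>I\<close>] 0 ip by auto
    ultimately show ?case using rows[OF \<open>i\<in>I\<close>] m by simp
  next
    case (Suc n)
    then obtain m' where m: "m = Suc m'" "n < m'" by (cases m) auto
    obtain y where y: "adj i y" "(adj ^^ n) y p" using Suc.prems(1) by (rule relpowp_Suc_E2)
    have yI: "y \<in> I" using adj_in y(1) by auto
    have py: "?p m' y < 1" using Suc.IH[OF y(2) yI Suc.prems(3,4) m(2)] .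
    have Qy: "0 < Q i y" using Qnn[OF Suc.prems(2) yI] Qz[OF Suc.prems(2) yI] y(1) by force
    have "Q i y * (1 - ?p m' y) \<le> (\<Sum>k\<in>I. Q i k * (1 - ?p m' k))"
      by (rule member_le_sum[where f="\<lambda>k. Q i k * (1 - ?p m' k)"])
         (use yI finI pwb Qnn Suc.prems(2) in auto)
    moreover have "0 < Q i y * (1 - ?p m' y)" using Qy py by simp
    moreover have "(\<Sum>k\<in>I. Q i k * (1 - ?p m' k)) = (\<Sum>k\<in>I. Q i k) - (\<Sum>k\<in>I. Q i k * ?p m' k)"
      by (simp add: right_diff_distrib sum_subtractf)
    ultimately show ?case using rowle[OF Suc.prems(2)] m by simp
  qed
  have ex: "\<exists>n. \<exists>p\<in>I. q p \<noteq> 0 \<and> (adj ^^ n) i p" if i: "i \<in> I" for i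
  proof -
    obtain p where p: "p \<in> I" "q p \<noteq> 0" using q_nz by blast
    then have "adj\<^sup>*\<^sup>* i p" using connected i by blast
    then show ?thesis using p by (auto simp: rtranclp_power)
  qed
  define nn where "nn i = (SOME n. \<exists>p\<in>I. q p \<noteq> 0 \<and> (adj ^^ n) i p)" for i
  have nn: "i \<in> I \<Longrightarrow> \<exists>p\<in>I. q p \<noteq> 0 \<and> (adj ^^ nn i) i p" for i
    unfolding nn_def by (rule someI_ex) (rule ex)
  define N where "N = Suc (\<Sum>i\<in>I. nn i)"
  have nnN: "i \<in> I \<Longrightarrow> nn i < N" for i
    unfolding N_def using member_le_sum[of i I nn] finI by simp
  have pN: "i \<in> I \<Longrightarrow> ?p N i < 1" for i
    using nn[of i] nnN[of i] lt by blast
  define phi where "phi i = (\<Sum>n<N. ?p n i)" for i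
  show ?thesis
  proof (intro exI ballI conjI)
    fix i assume i: "i \<in> I"
    have "?p 0 i \<le> phi i" unfolding phi_def
      by (rule member_le_sum[where f="\<lambda>n. ?p n i"]) (use pwb i N_def in auto)
    then show "1 \<le> phi i" by simp
    have "(\<Sum>k\<in>I. Q i k * phi k) = (\<Sum>n<N. ?p (Suc n) i)"
      unfolding phi_def by (simp add: sum_distrib_left sum.swap[of _ I])
    also have "\<dots> = phi i - (?p 0 i - ?p N i)"
      unfolding phi_def using sum_lessThan_telescope[of "\<lambda>n. ?p n i" N]
      by (simp add: sum_subtractf)
    also have "\<dots> < phi i" using pN[OF i] by simp
    finally show "(\<Sum>k\<in>I. Q i k * phi k) < phi i" .
  qed
qed


theorem theorem1:
  fixes I :: "'a set" and adj :: "'a \<Rightarrow> 'a \<Rightarrow> bool" and ff :: 'a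
    and Q :: "'a \<Rightarrow> 'a \<Rightarrow> real" and q :: "'a \<Rightarrow> real" and C :: "'a \<Rightarrow> 'a \<Rightarrow> real"
  assumes finI: "finite I"
    and adj_in: "\<And>i j. adj i j \<Longrightarrow> i \<in> I \<and> j \<in> I"
    and adj_sym: "\<And>i j. adj i j \<Longrightarrow> adj j i"
    and adj_irrefl: "\<And>i. \<not> adj i i"
    and connected: "\<forall>i\<in>I. \<forall>j\<in>I. adj\<^sup>*\<^sup>* i j"
    and ff_notin: "ff \<notin> I"
    and Q_nonneg: "\<forall>i\<in>I. \<forall>j\<in>I. Q i j \<ge> 0"
    and q_nonneg: "\<forall>i\<in>I. q i \<ge> 0"
    and Q_zero: "\<forall>i\<in>I. \<forall>j\<in>I. Q i j = 0 \<longleftrightarrow> \<not> adj i j"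
    and rows: "\<forall>i\<in>I. (\<Sum>j\<in>I. Q i j) + q i = 1"
    and q_nz: "\<exists>i\<in>I. q i \<noteq> 0"
    and substoch: "\<forall>l\<in>I. strictly_substochastic Q (I - {l})"
    and C_sym: "\<forall>i\<in>insert ff I. \<forall>j\<in>insert ff I. C i j = C j i"
    and C_nonneg: "\<forall>i\<in>insert ff I. \<forall>j\<in>insert ff I. C i j \<ge> 0"
    and Q_C: "\<forall>i\<in>I. \<forall>j\<in>I. Q i j = C i j / (\<Sum>k\<in>insert ff I. C i k)"
    and q_C: "\<forall>i\<in>I. q i = C i ff / (\<Sum>k\<in>insert ff I. C i k)"
  shows "(\<forall>i\<in>I. \<forall>j\<in>I. adj i j \<longrightarrow>
            convergent (\<lambda>t. mpaW I adj Q q t i j) \<and> convergent (\<lambda>t. mpaH I adj Q q t i j))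
       \<and> (\<forall>l\<in>I. convergent (\<lambda>t. mpa_node_H I adj Q q t l))"
proof -
  obtain phi where phi: "\<forall>i\<in>I. 1 \<le> phi i \<and> (\<Sum>k\<in>I. Q i k * phi k) < phi i"
    using phi_exists[of I adj Q q, OF finI adj_in connected] Q_nonneg q_nonneg Q_zero rows q_nz
    by blast
  define pp where "pp i = (\<Sum>k\<in>insert ff I. C i k)" for i
  have pp_pos: "0 < pp i" if i: "i \<in> I" for i
  proof -
    have "0 \<le> pp i" unfolding pp_def using C_nonneg i by (intro sum_nonneg) auto
    moreover have "pp i \<noteq> 0"
    proof
      assume "pp i = 0"
      then have "\<forall>j\<in>I. Q i j = 0" "q i = 0" using Q_C q_C i by (auto simp: pp_def)
      moreover have "(\<Sum>j\<in>I. Q i j) + q i = 1" using rows i by blast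
      ultimately show False by simp
    qed
    ultimately show ?thesis by simp
  qed
  have rev: "pp i * Q i k = pp k * Q k i" if "i \<in> I" "k \<in> I" for i k
  proof -
    have "pp i * Q i k = C i k" using Q_C that pp_pos[OF that(1)] by (simp add: pp_def)
    moreover have "pp k * Q k i = C k i" using Q_C that pp_pos[OF that(2)] by (simp add: pp_def)
    ultimately show ?thesis using C_sym that by simp
  qed
  interpret mctx I adj Q q pp phi
    by unfold_locales (use finI adj_in adj_sym Q_nonneg q_nonneg Q_zero rows pp_pos rev phi in auto)
  show ?thesis using W_conv H_conv node_conv by blast
qed

end
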